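(* Let $q\ge 2$, $n\ge 1$ and $\varepsilon\in\mathbb{N}$ with $\varepsilon\le n$. Let $x\in\mathbb{Z}_q^n$ be a hidden vector, and suppose the attacker has access to an oracle $\texttt{Match}_{x,\varepsilon}$ which, on a query $y\in\mathbb{Z}_q^n$, returns $1$ if $d(x,y)\le\varepsilon$ and $0$ otherwise, and which additionally reveals, whenever $d(x,y)\le\varepsilon$, the error positions $\{i: x_i\neq y_i\}$ together with the corresponding error values (enough to correct $y_i$ to $x_i$ at each such position). Then there is an adaptive query strategy that recovers $x$ using $\mathcal{O}(q^{n-\varepsilon})$ queries to $\texttt{Match}_{x,\varepsilon}$.
   Context: $\mathbb{Z}_q^n=\{0,\dots,q-1\}^n$ is equipped with the Hamming distance $d(x,y)=|\{i\in\{1,\dots,n\}: x_i\neq y_i\}|$. The attacker may choose each query adaptively based on previous oracle answers; complexity is measured as the number of oracle queries. *)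

theory Defs
  imports Complex_Main
begin

text \<open>Z_q^n as lists of length n with entries in {0..q-1}.\<close>
definition vecs :: "nat \<Rightarrow> nat \<Rightarrow> nat list set" where
  "vecs q n = {xs. length xs = n \<and> set xs \<subseteq> {..<q}}"

definition hdist :: "nat list \<Rightarrow> nat list \<Rightarrow> nat" where
  "hdist x y = card {i. i < length x \<and> x ! i \<noteq> y ! i}"

text \<open>Oracle Match_{x,eps}: None encodes answer 0; Some E encodes answer 1 together with
  the error positions i and the corresponding correct values x_i.\<close>
definition match_oracle :: "nat \<Rightarrow> nat list \<Rightarrow> nat list \<Rightarrow> (nat \<times> nat) set option" where
  "match_oracle eps x y =
     (if hdist x y \<le> eps then Some {(i, x ! i) | i. i < length x \<and> x ! i \<noteq> y ! i} else None)"

text \<open>Adaptive query strategies as decision trees.\<close>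
datatype strat = Done "nat list" | Ask "nat list" "(nat \<times> nat) set option \<Rightarrow> strat"

primrec run :: "nat \<Rightarrow> nat list \<Rightarrow> strat \<Rightarrow> nat list list \<times> nat list" where
  "run eps x (Done r) = ([], r)"
| "run eps x (Ask y f) =
     (let (qs, r) = run eps x (f (match_oracle eps x y)) in (y # qs, r))"

end

theory Submission
  imports Defs
begin

definition fixv :: "nat list \<Rightarrow> (nat \<times> nat) set \<Rightarrow> nat list" where
  "fixv y E = map (\<lambda>i. if i \<in> fst ` E then (SOME v. (i,v) \<in> E) else y ! i) [0..<length y]"

fun go :: "nat list list \<Rightarrow> strat" where
  "go [] = Done []"
| "go (y # ys) = Ask y (\<lambda>a. case a of None \<Rightarrow> go ys | Some E \<Rightarrow> Done (fixv y E))"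

lemma fixv_ok:
  assumes "length y = length x"
  shows "fixv y {(i, x ! i) | i. i < length x \<and> x ! i \<noteq> y ! i} = x"
proof (rule nth_equalityI)
  show "length (fixv y {(i, x ! i) | i. i < length x \<and> x ! i \<noteq> y ! i}) = length x"
    using assms by (simp add: fixv_def)
next
  fix i assume i: "i < length (fixv y {(i, x ! i) | i. i < length x \<and> x ! i \<noteq> y ! i})"
  hence il: "i < length x" using assms by (simp add: fixv_def)
  show "fixv y {(i, x ! i) | i. i < length x \<and> x ! i \<noteq> y ! i} ! i = x ! i"
  proof (cases "x ! i = y ! i")
    case True
    then show ?thesis using il assms by (auto simp: fixv_def image_iff)
  next
    case False
    have "i \<in> fst ` {(i, x ! i) | i. i < length x \<and> x ! i \<noteq> y ! i}"
      using False il by (auto simp: image_iff)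
    moreover have "(SOME v. (i,v) \<in> {(i, x ! i) | i. i < length x \<and> x ! i \<noteq> y ! i}) = x ! i"
      using False il by (intro some_equality) auto
    ultimately show ?thesis using il assms by (simp add: fixv_def)
  qed
qed

lemma go_props:
  "(\<forall>y\<in>set L. length y = length x) \<Longrightarrow> set (fst (run eps x (go L))) \<subseteq> set L \<and> length (fst (run eps x (go L))) \<le> length L \<and>
   ((\<exists>y\<in>set L. length y = length x \<and> hdist x y \<le> eps) \<longrightarrow> snd (run eps x (go L)) = x)"
proof (induction L)
  case Nil
  then show ?case by simp
next
  case (Cons y ys)
  show ?case
  proof (cases "hdist x y \<le> eps")
    case True
    then show ?thesis using Cons.prems
      by (auto simp: match_oracle_def split: prod.splits intro: fixv_ok)
  next
    case False
    then show ?thesis using Cons.IH Cons.prems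
      by (auto simp: match_oracle_def split: prod.splits)
  qed
qed

lemma hdist_le:
  assumes "length x = n" "eps \<le> n"
  shows "hdist x (take (n - eps) x @ replicate eps 0) \<le> eps"
proof -
  have "{i. i < length x \<and> x ! i \<noteq> (take (n - eps) x @ replicate eps 0) ! i} \<subseteq> {n - eps..<n}"
    using assms by (auto simp: nth_append)
  hence "card {i. i < length x \<and> x ! i \<noteq> (take (n - eps) x @ replicate eps 0) ! i} \<le> card {n - eps..<n}"
    by (intro card_mono) auto
  thus ?thesis using assms by (simp add: hdist_def)
qed

theorem theorem3:
  shows "\<exists>C::real. \<forall>q n eps::nat. q \<ge> 2 \<longrightarrow> n \<ge> 1 \<longrightarrow> eps \<le> n \<longrightarrow>
     (\<exists>S::strat. \<forall>x \<in> vecs q n.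
        snd (run eps x S) = x \<and> set (fst (run eps x S)) \<subseteq> vecs q n \<and>
        real (length (fst (run eps x S))) \<le> C * real q ^ (n - eps))"
proof (rule exI[of _ 1], intro allI impI)
  fix q n eps :: nat
  assume "q \<ge> 2" "n \<ge> 1" and en: "eps \<le> n"
  define L where "L = map (\<lambda>p. p @ replicate eps (0::nat)) (List.n_lists (n - eps) [0..<q])"
  have lenL: "length L = q ^ (n - eps)" by (simp add: L_def length_n_lists)
  have setL: "set L \<subseteq> vecs q n"
    using en \<open>q \<ge> 2\<close> by (auto simp: L_def set_n_lists vecs_def subset_iff)
  show "\<exists>S::strat. \<forall>x \<in> vecs q n.
        snd (run eps x S) = x \<and> set (fst (run eps x S)) \<subseteq> vecs q n \<and>
        real (length (fst (run eps x S))) \<le> 1 * real q ^ (n - eps)"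
  proof (intro exI ballI conjI)
    fix x assume x: "x \<in> vecs q n"
    have P: "set (fst (run eps x (go L))) \<subseteq> set L \<and> length (fst (run eps x (go L))) \<le> length L \<and>
      ((\<exists>y\<in>set L. length y = length x \<and> hdist x y \<le> eps) \<longrightarrow> snd (run eps x (go L)) = x)"
      using setL x by (intro go_props) (auto simp: vecs_def)
    have "take (n - eps) x @ replicate eps 0 \<in> set L"
    proof -
      have "set (take (n - eps) x) \<subseteq> {0..<q}" "length (take (n - eps) x) = n - eps"
        using x en set_take_subset[of "n - eps" x] by (auto simp: vecs_def)
      thus ?thesis by (auto simp: L_def set_n_lists)
    qed
    moreover have "length (take (n - eps) x @ replicate eps 0) = length x"
      using x en by (simp add: vecs_def)
    moreover have "hdist x (take (n - eps) x @ replicate eps 0) \<le> eps"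
      using x en by (intro hdist_le) (auto simp: vecs_def)
    ultimately show "snd (run eps x (go L)) = x" using P by blast
    show "set (fst (run eps x (go L))) \<subseteq> vecs q n" using P setL by blast
    have "length (fst (run eps x (go L))) \<le> q ^ (n - eps)" using P lenL by simp
    thus "real (length (fst (run eps x (go L)))) \<le> 1 * real q ^ (n - eps)"
      by (metis mult_1 of_nat_le_iff of_nat_power)
  qed
qed

end
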